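(* Consider the mixed support-set model described in the context, and let $\mathsf p,\mathsf q_1,\dots,\mathsf q_h,\mathsf r_1,\dots,\mathsf r_m$ be $1+h+m$ distinct sensors. Then (whenever the conditioning event has positive probability) $\Pr\Big(i\in\mathcal T_{\mathsf p}\ \Big|\ i\in\hat{\mathcal T}_{\mathsf p}^{\complement},\ i\in\bigcap_{l=1}^{h}\hat{\mathcal T}_{\mathsf q_l},\ i\in\bigcap_{l=1}^{m}\hat{\mathcal T}_{\mathsf r_l}^{\complement}\Big)$ equals, writing $\phi=\frac{T}{N-T}\epsilon$, $$\frac{(1-\epsilon)^{h}\epsilon^{m+1}\frac{J}{N}+\epsilon\,\phi^{h}(1-\phi)^{m}\frac{I}{N}}{(1-\epsilon)^{h}\epsilon^{m+1}\frac{J}{N}+h(1-\epsilon)\phi^{h-1}(1-\phi)^{m+1}\frac{I}{N}+(m+1)\,\epsilon\,\phi^{h}(1-\phi)^{m}\frac{I}{N}+\phi^{h}(1-\phi)^{m+1}\frac{N-J-(m+h+1)I}{N}}.$$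
   Context: Let $N>T\ge1$ be integers and $\Omega=\{1,\dots,N\}$; complements are taken in $\Omega$. A finite set $\mathcal L$ of sensors is given. Mixed support-set model: there are a fixed set $\mathcal J\subseteq\Omega$ with $|\mathcal J|=J$ and, for each sensor $\mathsf p\in\mathcal L$, a fixed set $\mathcal I_{\mathsf p}\subseteq\Omega$ with $|\mathcal I_{\mathsf p}|=I$, such that $\mathcal I_{\mathsf p}\cap\mathcal J=\emptyset$ for all $\mathsf p$, $\mathcal I_{\mathsf p}\cap\mathcal I_{\mathsf q}=\emptyset$ for $\mathsf p\ne\mathsf q$, and the true support set of sensor $\mathsf p$ is $\mathcal T_{\mathsf p}=\mathcal I_{\mathsf p}\cup\mathcal J$; thus $T=I+J$. Each sensor has a random estimated support set $\hat{\mathcal T}_{\mathsf p}\subseteq\Omega$. A random index $i$ is uniformly distributed on $\Omega$ and independent of all estimates. System model: there is $\epsilon$ with $0\le\epsilon\le (N-T)/N$, common to all sensors, such that for every sensor $\mathsf p$ and every $j\in\Omega$, $\Pr(j\in\hat{\mathcal T}_{\mathsf p})=1-\epsilon$ if $j\in\mathcal T_{\mathsf p}$ and $\Pr(j\in\hat{\mathcal T}_{\mathsf p})=\frac{T}{N-T}\epsilon$ if $j\notin\mathcal T_{\mathsf p}$ (so $\Pr(i\in\hat{\mathcal T}_{\mathsf p})=T/N$, detection probability $1-\epsilon$, miss probability $\epsilon$, false-alarm probability $\frac{T}{N-T}\epsilon$). For each fixed $j\in\Omega$, the events $\{j\in\hat{\mathcal T}_{\mathsf p}\}$, $\mathsf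 p\in\mathcal L$, are mutually independent. Convention: $0^0=1$ and a term with coefficient $0$ is $0$. *)

theory Defs
  imports "HOL-Probability.Probability"
begin

end

theory Submission
  imports Defs
begin

lemma sa_event:
  assumes "sigma_algebra \<Omega> S" "finite K" "finite C" "\<And>s. s\<in>K\<union>C \<Longrightarrow> A s \<in> S"
  shows "\<Omega> - (\<Union>s\<in>K. \<Omega> - A s) - (\<Union>s\<in>C. A s) \<in> S"
proof -
  interpret sigma_algebra \<Omega> S by fact
  show ?thesis using assms(2-4) by (intro Diff finite_UN compl_sets top) auto
qed

lemma indep_compl_prod:
  assumes P: "prob_space M" and ind: "prob_space.indep_events M A L"
    and "finite C" "finite K" "K \<subseteq> L" "C \<subseteq> L" "K \<inter> C = {}"
  shows "measure M (space M - (\<Union>s\<in>K. space M - A s) - (\<Union>s\<in>C. A s))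
     = (\<Prod>s\<in>K. measure M (A s)) * (\<Prod>s\<in>C. 1 - measure M (A s))"
  using assms(3-7)
proof (induction C arbitrary: K rule: finite_induct)
  case empty
  interpret prob_space M by fact
  have ev: "A ` L \<subseteq> events" using ind by (simp add: indep_events_def)
  show ?case
  proof (cases "K = {}")
    case True then show ?thesis by (simp add: prob_space)
  next
    case False
    have sub: "\<And>s. s \<in> K \<Longrightarrow> A s \<subseteq> space M" using ev empty.prems sets.sets_into_space by blast
    have "space M - (\<Union>s\<in>K. space M - A s) = (\<Inter>s\<in>K. A s)" using False sub by blast
    moreover have "prob (\<Inter>s\<in>K. A s) = (\<Prod>s\<in>K. prob (A s))"
      using ind False empty.prems by (simp add: indep_events_def)
    ultimately show ?thesis by simp
  qed
next
  case (insert c C)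
  interpret prob_space M by fact
  have ev: "A ` L \<subseteq> events" using ind by (simp add: indep_events_def)
  have sa: "sigma_algebra (space M) (sets M)" by (rule sets.sigma_algebra_axioms)
  define X where "X = space M - (\<Union>s\<in>K. space M - A s) - (\<Union>s\<in>C. A s)"
  have Xev: "X \<in> events" unfolding X_def
    by (rule sa_event[OF sa]) (use insert.hyps insert.prems ev in blast)+
  have cev: "A c \<in> events" using insert.prems ev by blast
  have cK: "c \<notin> K" using insert.prems by blast
  have eq1: "space M - (\<Union>s\<in>K. space M - A s) - (\<Union>s\<in>insert c C. A s) = X - A c"
    unfolding X_def by auto
  have eq2: "X \<inter> A c = space M - (\<Union>s\<in>insert c K. space M - A s) - (\<Union>s\<in>C. A s)"
    unfolding X_def by auto
  have "prob (X - A c) = prob X - prob (X \<inter> A c)"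
    by (rule finite_measure_Diff'[OF Xev cev])
  also have "prob X = (\<Prod>s\<in>K. prob (A s)) * (\<Prod>s\<in>C. 1 - prob (A s))"
    unfolding X_def using insert by auto
  also have "prob (X \<inter> A c) = (\<Prod>s\<in>insert c K. prob (A s)) * (\<Prod>s\<in>C. 1 - prob (A s))"
    unfolding eq2 using insert by (intro insert.IH) auto
  finally show ?case unfolding eq1 using insert cK
    by (simp add: algebra_simps)
qed

lemma prod_if_single:
  assumes "finite S" "l0 \<in> S"
  shows "(\<Prod>l\<in>S. if l = l0 then x else y) = (x::real) * y ^ (card S - 1)"
proof -
  have "(\<Prod>l\<in>S. if l = l0 then x else y) = x * (\<Prod>l\<in>S - {l0}. if l = l0 then x else y)"
    using assms by (simp add: prod.remove)
  also have "(\<Prod>l\<in>S - {l0}. if l = l0 then x else y) = (\<Prod>l\<in>S - {l0}. y)"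
    by (rule prod.cong) auto
  finally show ?thesis using assms by simp
qed

theorem proposition5:
  fixes M :: "'w measure"
    and N T I J :: nat and \<epsilon> :: real
    and L :: "'s set"
    and Jset :: "nat set" and Iset :: "'s \<Rightarrow> nat set"
    and est :: "'s \<Rightarrow> 'w \<Rightarrow> nat set"
    and idx :: "'w \<Rightarrow> nat"
    and p :: 's and q r :: "nat \<Rightarrow> 's" and h m :: nat
  assumes "prob_space M"
    and "N > T" and "T \<ge> 1" and "T = I + J"
    and "0 \<le> \<epsilon>" and "\<epsilon> \<le> (real N - real T) / real N"
    and "finite L"
    and "Jset \<subseteq> {1..N}" and "card Jset = J"
    and "\<And>s. s \<in> L \<Longrightarrow> Iset s \<subseteq> {1..N} \<and> card (Iset s) = I \<and> Iset s \<inter> Jset = {}"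
    and "\<And>s s'. s \<in> L \<Longrightarrow> s' \<in> L \<Longrightarrow> s \<noteq> s' \<Longrightarrow> Iset s \<inter> Iset s' = {}"
    \<comment> \<open>estimated support sets are random subsets of Omega\<close>
    and "\<And>s w. s \<in> L \<Longrightarrow> w \<in> space M \<Longrightarrow> est s w \<subseteq> {1..N}"
    and "\<And>s j. s \<in> L \<Longrightarrow> {w \<in> space M. j \<in> est s w} \<in> sets M"
    \<comment> \<open>system model: detection / false-alarm probabilities\<close>
    and "\<And>s j. s \<in> L \<Longrightarrow> j \<in> {1..N} \<Longrightarrow>
           measure M {w \<in> space M. j \<in> est s w} =
             (if j \<in> Iset s \<union> Jset then 1 - \<epsilon> else real T / (real N - real T) * \<epsilon>)"
    \<comment> \<open>for fixed j, the events across sensors are mutually independent\<close>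
    and "\<And>j. j \<in> {1..N} \<Longrightarrow> prob_space.indep_events M (\<lambda>s. {w \<in> space M. j \<in> est s w}) L"
    \<comment> \<open>the index i is uniform on Omega\<close>
    and "\<And>w. w \<in> space M \<Longrightarrow> idx w \<in> {1..N}"
    and "\<And>j. {w \<in> space M. idx w = j} \<in> sets M"
    and "\<And>j. j \<in> {1..N} \<Longrightarrow> measure M {w \<in> space M. idx w = j} = 1 / real N"
    \<comment> \<open>the index i is independent of all estimates\<close>
    and "prob_space.indep_set M
           (sigma_sets (space M) {{w \<in> space M. idx w = j} | j. True})
           (sigma_sets (space M) {{w \<in> space M. j \<in> est s w} | s j. s \<in> L})"
    \<comment> \<open>1+h+m distinct sensors\<close>
    and "p \<in> L" and "q ` {1..h} \<subseteq> L" and "r ` {1..m} \<subseteq> L"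
    and "inj_on q {1..h}" and "inj_on r {1..m}"
    and "q ` {1..h} \<inter> r ` {1..m} = {}"
    and "p \<notin> q ` {1..h}" and "p \<notin> r ` {1..m}"
    and "measure M {w \<in> space M. idx w \<notin> est p w \<and> (\<forall>l\<in>{1..h}. idx w \<in> est (q l) w)
                     \<and> (\<forall>l\<in>{1..m}. idx w \<notin> est (r l) w)} > 0"
  shows "cond_prob M (\<lambda>w. idx w \<in> Iset p \<union> Jset)
           (\<lambda>w. idx w \<notin> est p w \<and> (\<forall>l\<in>{1..h}. idx w \<in> est (q l) w)
                 \<and> (\<forall>l\<in>{1..m}. idx w \<notin> est (r l) w)) =
    (let \<phi> = real T / (real N - real T) * \<epsilon> in
      ((1 - \<epsilon>) ^ h * \<epsilon> ^ (m + 1) * (real J / real N)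
        + \<epsilon> * \<phi> ^ h * (1 - \<phi>) ^ m * (real I / real N))
      / ((1 - \<epsilon>) ^ h * \<epsilon> ^ (m + 1) * (real J / real N)
        + real h * (1 - \<epsilon>) * \<phi> ^ (h - 1) * (1 - \<phi>) ^ (m + 1) * (real I / real N)
        + real (m + 1) * \<epsilon> * \<phi> ^ h * (1 - \<phi>) ^ m * (real I / real N)
        + \<phi> ^ h * (1 - \<phi>) ^ (m + 1)
            * ((real N - real J - real (m + h + 1) * real I) / real N)))"
  proof -
  interpret prob_space M by fact
  note a = assms
  define \<phi> where "\<phi> = real T / (real N - real T) * \<epsilon>"
  define A where "A j s = {w \<in> space M. j \<in> est s w}" for j s
  define F where "F j = {w \<in> space M. j \<notin> est p w \<and> (\<forall>l\<in>{1..h}. j \<in> est (q l) w)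
                     \<and> (\<forall>l\<in>{1..m}. j \<notin> est (r l) w)}" for j
  define K where "K = q ` {1..h}"
  define C where "C = insert p (r ` {1..m})"
  define pr where "pr j s = (if j \<in> Iset s \<union> Jset then 1 - \<epsilon> else \<phi>)" for j s
  define g where "g j = prob (F j)" for j
  have KL: "K \<subseteq> L" using a(21) by (simp add: K_def)
  have CL: "C \<subseteq> L" using a(20,22) by (simp add: C_def)
  have KC: "K \<inter> C = {}" using a(25,26) by (auto simp: K_def C_def)
  have finK: "finite K" and finC: "finite C" by (auto simp: K_def C_def)
  have Aev: "\<And>j s. s \<in> L \<Longrightarrow> A j s \<in> events" using a(13) by (simp add: A_def)
  have Feq: "F j = space M - (\<Union>s\<in>K. space M - A j s) - (\<Union>s\<in>C. A j s)" for j
    by (auto simp: F_def A_def K_def C_def)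
  have Fev: "F j \<in> events" for j
    unfolding Feq by (rule sa_event[OF sets.sigma_algebra_axioms finK finC])
      (use KL CL Aev in blast)
  have prA: "prob (A j s) = pr j s" if "j \<in> {1..N}" "s \<in> L" for j s
    using a(14)[OF that(2,1)] by (simp add: A_def pr_def \<phi>_def)
  have gform: "g j = (\<Prod>l\<in>{1..h}. pr j (q l)) * ((1 - pr j p) * (\<Prod>l\<in>{1..m}. 1 - pr j (r l)))"
    if j: "j \<in> {1..N}" for j
  proof -
    have ind: "indep_events (A j) L" using a(15)[OF j] unfolding A_def by simp
    have "g j = (\<Prod>s\<in>K. prob (A j s)) * (\<Prod>s\<in>C. 1 - prob (A j s))"
      unfolding g_def Feq by (rule indep_compl_prod[OF a(1) ind finC finK KL CL KC])
    also have "(\<Prod>s\<in>K. prob (A j s)) = (\<Prod>l\<in>{1..h}. pr j (q l))"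
      unfolding K_def using a(21) j
      by (subst prod.reindex[OF a(23)]) (auto intro!: prod.cong prA)
    also have "(\<Prod>s\<in>C. 1 - prob (A j s)) = (1 - pr j p) * (\<Prod>l\<in>{1..m}. 1 - pr j (r l))"
    proof -
      have "(\<Prod>s\<in>C. 1 - prob (A j s)) = (1 - prob (A j p)) * (\<Prod>s\<in>r ` {1..m}. 1 - prob (A j s))"
        unfolding C_def using a(27) by simp
      also have "(\<Prod>s\<in>r ` {1..m}. 1 - prob (A j s)) = (\<Prod>l\<in>{1..m}. 1 - prob (A j (r l)))"
        by (rule prod.reindex_cong[OF a(24)]) auto
      also have "\<dots> = (\<Prod>l\<in>{1..m}. 1 - pr j (r l))"
        using a(22) j by (auto intro!: prod.cong simp: prA)
      finally show ?thesis using prA[OF j a(20)] by simp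
    qed
    finally show ?thesis .
  qed
  have qL: "q l \<in> L" if "l \<in> {1..h}" for l using a(21) that by blast
  have rL: "r l \<in> L" if "l \<in> {1..m}" for l using a(22) that by blast
  have pq: "q l \<noteq> p" if "l \<in> {1..h}" for l using a(26) that by blast
  have pr': "r l \<noteq> p" if "l \<in> {1..m}" for l using a(27) that by blast
  have qr: "q l \<noteq> r l'" if "l \<in> {1..h}" "l' \<in> {1..m}" for l l' using a(25) that by blast
  have qq: "q l \<noteq> q l'" if "l \<in> {1..h}" "l' \<in> {1..h}" "l \<noteq> l'" for l l'
    using a(23) that by (meson inj_on_eq_iff)
  have rr: "r l \<noteq> r l'" if "l \<in> {1..m}" "l' \<in> {1..m}" "l \<noteq> l'" for l l'
    using a(24) that by (meson inj_on_eq_iff)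
  have dis: "j \<notin> Iset s'" if "s \<in> L" "s' \<in> L" "s \<noteq> s'" "j \<in> Iset s" for j s s'
    using a(11)[OF that(1-3)] that(4) by blast
  have IJ: "j \<notin> Jset" if "s \<in> L" "j \<in> Iset s" for j s
    using a(10)[OF that(1)] that(2) by blast
  define UQ where "UQ = (\<Union>l\<in>{1..h}. Iset (q l))"
  define UR where "UR = (\<Union>l\<in>{1..m}. Iset (r l))"
  define va where "va = (1 - \<epsilon>) ^ h * \<epsilon> ^ (m + 1)"
  define vb where "vb = \<epsilon> * \<phi> ^ h * (1 - \<phi>) ^ m"
  define vc where "vc = (1 - \<epsilon>) * \<phi> ^ (h - 1) * (1 - \<phi>) ^ (m + 1)"
  define ve where "ve = \<phi> ^ h * (1 - \<phi>) ^ (m + 1)"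
  define val where "val j = (if j \<in> Jset then va else if j \<in> Iset p then vb else if j \<in> UQ then vc
      else if j \<in> UR then vb else ve)" for j
  have gval: "g j = val j" if j: "j \<in> {1..N}" for j
  proof (cases "j \<in> Jset")
    case True
    have "g j = (\<Prod>l\<in>{1..h}. 1 - \<epsilon>) * ((1 - (1 - \<epsilon>)) * (\<Prod>l\<in>{1..m}. 1 - (1 - \<epsilon>)))"
      unfolding gform[OF j] using True by (simp add: pr_def)
    then show ?thesis using True by (simp add: val_def va_def)
  next
    case nJ: False
    show ?thesis
    proof (cases "j \<in> Iset p")
      case True
      have "g j = (\<Prod>l\<in>{1..h}. \<phi>) * ((1 - (1 - \<epsilon>)) * (\<Prod>l\<in>{1..m}. 1 - \<phi>))"
        unfolding gform[OF j] using True nJ dis[OF a(20) qL pq[symmetric]] dis[OF a(20) rL pr'[symmetric]]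
        by (auto simp: pr_def intro!: prod.cong)
      then show ?thesis using True nJ by (simp add: val_def vb_def)
    next
      case nP: False
      show ?thesis
      proof (cases "j \<in> UQ")
        case True
        then obtain l0 where l0: "l0 \<in> {1..h}" "j \<in> Iset (q l0)" unfolding UQ_def by blast
        have "(\<Prod>l\<in>{1..h}. pr j (q l)) = (\<Prod>l\<in>{1..h}. if l = l0 then 1 - \<epsilon> else \<phi>)"
        proof (rule prod.cong)
          fix l assume l: "l \<in> {1..h}"
          show "pr j (q l) = (if l = l0 then 1 - \<epsilon> else \<phi>)"
            using l l0 nJ dis[OF qL[OF l0(1)] qL[OF l] qq[OF l0(1) l]] by (auto simp: pr_def)
        qed simp
        also have "\<dots> = (1 - \<epsilon>) * \<phi> ^ (h - 1)" using l0 by (simp add: prod_if_single)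
        finally have 1: "(\<Prod>l\<in>{1..h}. pr j (q l)) = (1 - \<epsilon>) * \<phi> ^ (h - 1)" .
        have 2: "(\<Prod>l\<in>{1..m}. 1 - pr j (r l)) = (1 - \<phi>) ^ m"
          using dis[OF qL[OF l0(1)] rL qr[OF l0(1)]] l0(2) nJ by (auto simp: pr_def intro!: prod.cong)
        have "g j = (1 - \<epsilon>) * \<phi> ^ (h - 1) * ((1 - \<phi>) * (1 - \<phi>) ^ m)"
          unfolding gform[OF j] 1 2 using nP nJ by (simp add: pr_def)
        then show ?thesis using True nJ nP by (simp add: val_def vc_def)
      next
        case nQ: False
        show ?thesis
        proof (cases "j \<in> UR")
          case True
          then obtain l0 where l0: "l0 \<in> {1..m}" "j \<in> Iset (r l0)" unfolding UR_def by blast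
          then obtain m' where m': "m = Suc m'" by (cases m) auto
          have "(\<Prod>l\<in>{1..m}. 1 - pr j (r l)) = (\<Prod>l\<in>{1..m}. if l = l0 then \<epsilon> else 1 - \<phi>)"
          proof (rule prod.cong)
            fix l assume l: "l \<in> {1..m}"
            show "1 - pr j (r l) = (if l = l0 then \<epsilon> else 1 - \<phi>)"
              using l l0 nJ dis[OF rL[OF l0(1)] rL[OF l] rr[OF l0(1) l]] by (auto simp: pr_def)
          qed simp
          also have "\<dots> = \<epsilon> * (1 - \<phi>) ^ (m - 1)" using l0 by (simp add: prod_if_single)
          finally have 1: "(\<Prod>l\<in>{1..m}. 1 - pr j (r l)) = \<epsilon> * (1 - \<phi>) ^ (m - 1)" .
          have 2: "(\<Prod>l\<in>{1..h}. pr j (q l)) = \<phi> ^ h"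
            using nQ nJ unfolding UQ_def by (auto simp: pr_def intro!: prod.cong)
          have "g j = \<phi> ^ h * ((1 - \<phi>) * (\<epsilon> * (1 - \<phi>) ^ (m - 1)))"
            unfolding gform[OF j] 1 2 using nP nJ by (simp add: pr_def)
          then show ?thesis using True nJ nP nQ m' by (simp add: val_def vb_def)
        next
          case nR: False
          have 1: "(\<Prod>l\<in>{1..m}. 1 - pr j (r l)) = (1 - \<phi>) ^ m"
            using nR nJ unfolding UR_def by (auto simp: pr_def intro!: prod.cong)
          have 2: "(\<Prod>l\<in>{1..h}. pr j (q l)) = \<phi> ^ h"
            using nQ nJ unfolding UQ_def by (auto simp: pr_def intro!: prod.cong)
          have "g j = \<phi> ^ h * ((1 - \<phi>) * (1 - \<phi>) ^ m)"
            unfolding gform[OF j] 1 2 using nP nJ by (simp add: pr_def)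
          then show ?thesis using nJ nP nQ nR by (simp add: val_def ve_def)
        qed
      qed
    qed
  qed
  have evt: "prob {w \<in> space M. idx w \<in> S \<and> (idx w \<notin> est p w \<and> (\<forall>l\<in>{1..h}. idx w \<in> est (q l) w)
                     \<and> (\<forall>l\<in>{1..m}. idx w \<notin> est (r l) w))} = (\<Sum>j\<in>S. g j / real N)"
    if S: "S \<subseteq> {1..N}" for S
  proof -
    have finS: "finite S" using S finite_subset by blast
    have seteq: "{w \<in> space M. idx w \<in> S \<and> (idx w \<notin> est p w \<and> (\<forall>l\<in>{1..h}. idx w \<in> est (q l) w)
                     \<and> (\<forall>l\<in>{1..m}. idx w \<notin> est (r l) w))} = (\<Union>j\<in>S. {w \<in> space M. idx w = j} \<inter> F j)"
      by (auto simp: F_def)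
    have "prob (\<Union>j\<in>S. {w \<in> space M. idx w = j} \<inter> F j) = (\<Sum>j\<in>S. prob ({w \<in> space M. idx w = j} \<inter> F j))"
      by (rule finite_measure_finite_Union[OF finS])
        (use a(17) Fev in \<open>auto simp: disjoint_family_on_def\<close>)
    also have "\<dots> = (\<Sum>j\<in>S. g j / real N)"
    proof (rule sum.cong[OF refl])
      fix j assume jS: "j \<in> S"
      have j: "j \<in> {1..N}" using jS S by blast
      let ?G = "{{w \<in> space M. j \<in> est s w} | s j. s \<in> L}"
      have G: "?G \<subseteq> Pow (space M)" by auto
      have m1: "{w \<in> space M. idx w = j} \<in> sigma_sets (space M) {{w \<in> space M. idx w = j} | j. True}"
        by (rule sigma_sets.Basic) blast
      have m2: "F j \<in> sigma_sets (space M) ?G"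
        unfolding Feq
        by (rule sa_event[OF sigma_algebra_sigma_sets[OF G] finK finC])
          (use KL CL in \<open>auto simp: A_def\<close>)
      have "prob ({w \<in> space M. idx w = j} \<inter> F j) = prob {w \<in> space M. idx w = j} * prob (F j)"
        by (rule indep_setD[OF a(19) m1 m2])
      then show "prob ({w \<in> space M. idx w = j} \<inter> F j) = g j / real N"
        using a(18)[OF j] by (simp add: g_def)
    qed
    finally show ?thesis unfolding seteq .
  qed
  have Ns: "real N > 0" using a(2) by simp
  have IsetN: "Iset s \<subseteq> {1..N}" "card (Iset s) = I" "finite (Iset s)" if "s \<in> L" for s
    using a(10)[OF that] finite_subset[of "Iset s" "{1..N}"] by auto
  have finJ: "finite Jset" using a(8) finite_subset by blast
  have cUQ: "card UQ = h * I" unfolding UQ_def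
    by (subst card_UN_disjoint) (use IsetN qL a(11) qq in auto)
  have cUR: "card UR = m * I" unfolding UR_def
    by (subst card_UN_disjoint) (use IsetN rL a(11) rr in auto)
  have finUQ: "finite UQ" and finUR: "finite UR" using IsetN qL rL by (auto simp: UQ_def UR_def)
  have d1: "Jset \<inter> Iset p = {}" using IJ[OF a(20)] by blast
  have d2: "(Jset \<union> Iset p) \<inter> UQ = {}"
    using IJ qL dis[OF a(20) qL pq[symmetric]] unfolding UQ_def by blast
  have d3: "(Jset \<union> Iset p \<union> UQ) \<inter> UR = {}"
    using IJ rL dis[OF a(20) rL pr'[symmetric]] dis[OF qL rL qr] unfolding UR_def UQ_def by blast
  define U where "U = Jset \<union> Iset p \<union> UQ \<union> UR"
  have UN: "U \<subseteq> {1..N}" using a(8) IsetN a(20) qL rL unfolding U_def UQ_def UR_def by blast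
  have cU: "card U = J + I + h * I + m * I" unfolding U_def
    using d1 d2 d3 finJ finUQ finUR IsetN[OF a(20)] a(9) cUQ cUR
    by (simp add: card_Un_disjoint)
  have cUle: "card U \<le> N" using card_mono[OF _ UN] by simp
  have cR: "card ({1..N} - U) = N - card U" using UN by (simp add: card_Diff_subset finite_subset[OF UN])
  have finU: "finite U" using finite_subset[OF UN] by simp
  have sumU: "(\<Sum>j\<in>U. val j) = J * va + I * vb + (h * I) * vc + (m * I) * vb"
  proof -
    have "(\<Sum>j\<in>U. val j) = (\<Sum>j\<in>Jset. val j) + (\<Sum>j\<in>Iset p. val j) + (\<Sum>j\<in>UQ. val j) + (\<Sum>j\<in>UR. val j)"
      unfolding U_def using d1 d2 d3 finJ finUQ finUR IsetN[OF a(20)]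
      by (simp add: sum.union_disjoint)
    also have "(\<Sum>j\<in>Jset. val j) = (\<Sum>j\<in>Jset. va)" by (rule sum.cong) (auto simp: val_def)
    also have "(\<Sum>j\<in>Iset p. val j) = (\<Sum>j\<in>Iset p. vb)" using d1 by (intro sum.cong) (auto simp: val_def)
    also have "(\<Sum>j\<in>UQ. val j) = (\<Sum>j\<in>UQ. vc)" using d2 by (intro sum.cong) (auto simp: val_def)
    also have "(\<Sum>j\<in>UR. val j) = (\<Sum>j\<in>UR. vb)" using d3 by (intro sum.cong) (auto simp: val_def)
    finally show ?thesis using a(9) IsetN[OF a(20)] cUQ cUR by simp
  qed
  have sumR: "(\<Sum>j\<in>{1..N} - U. val j) = real (N - card U) * ve"
  proof -
    have "(\<Sum>j\<in>{1..N} - U. val j) = (\<Sum>j\<in>{1..N} - U. ve)"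
      by (rule sum.cong) (auto simp: val_def U_def)
    then show ?thesis using cR by simp
  qed
  have sumAll: "(\<Sum>j\<in>{1..N}. val j) = J * va + I * vb + (h * I) * vc + (m * I) * vb + real (N - card U) * ve"
    using sum.subset_diff[OF UN, of val] sumU sumR by simp
  have E1: "{w \<in> space M. idx w \<notin> est p w \<and> (\<forall>l\<in>{1..h}. idx w \<in> est (q l) w)
                     \<and> (\<forall>l\<in>{1..m}. idx w \<notin> est (r l) w)} =
     {w \<in> space M. idx w \<in> {1..N} \<and> (idx w \<notin> est p w \<and> (\<forall>l\<in>{1..h}. idx w \<in> est (q l) w)
                     \<and> (\<forall>l\<in>{1..m}. idx w \<notin> est (r l) w))}" using a(16) by blast
  have den: "prob {w \<in> space M. idx w \<notin> est p w \<and> (\<forall>l\<in>{1..h}. idx w \<in> est (q l) w)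
                     \<and> (\<forall>l\<in>{1..m}. idx w \<notin> est (r l) w)} =
     (J * va + I * vb + (h * I) * vc + (m * I) * vb + real (N - card U) * ve) / N"
    unfolding E1 evt[OF order_refl] using gval sumAll
    by (simp add: sum_divide_distrib[symmetric])
  have SN: "Iset p \<union> Jset \<subseteq> {1..N}" using a(8) IsetN[OF a(20)] by blast
  have num: "prob {w \<in> space M. idx w \<in> Iset p \<union> Jset \<and> (idx w \<notin> est p w \<and> (\<forall>l\<in>{1..h}. idx w \<in> est (q l) w)
                     \<and> (\<forall>l\<in>{1..m}. idx w \<notin> est (r l) w))} = (J * va + I * vb) / N"
  proof -
    have "(\<Sum>j\<in>Iset p \<union> Jset. g j / real N) = (\<Sum>j\<in>Iset p \<union> Jset. val j / real N)"
      using SN gval by (intro sum.cong) auto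
    also have "\<dots> = (\<Sum>j\<in>Iset p \<union> Jset. val j) / N"
      by (simp add: sum_divide_distrib)
    also have "(\<Sum>j\<in>Iset p \<union> Jset. val j) = (\<Sum>j\<in>Iset p. val j) + (\<Sum>j\<in>Jset. val j)"
      using d1 finJ IsetN[OF a(20)] by (subst sum.union_disjoint) auto
    also have "(\<Sum>j\<in>Jset. val j) = (\<Sum>j\<in>Jset. va)" by (rule sum.cong) (auto simp: val_def)
    also have "(\<Sum>j\<in>Iset p. val j) = (\<Sum>j\<in>Iset p. vb)" using d1 by (intro sum.cong) (auto simp: val_def)
    finally show ?thesis using evt[OF SN] a(9) IsetN[OF a(20)] by (simp add: algebra_simps)
  qed
  have rc: "real (N - card U) = real N - real J - real (m + h + 1) * real I"
    using cU cUle by (simp add: of_nat_diff algebra_simps)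
  have n2: "(real J * va + real I * vb) / real N =
      (1 - \<epsilon>) ^ h * \<epsilon> ^ (m + 1) * (real J / real N)
        + \<epsilon> * \<phi> ^ h * (1 - \<phi>) ^ m * (real I / real N)"
    using Ns by (simp add: va_def vb_def field_simps)
  have d2: "(real J * va + real I * vb + real (h * I) * vc + real (m * I) * vb + real (N - card U) * ve) / real N =
      (1 - \<epsilon>) ^ h * \<epsilon> ^ (m + 1) * (real J / real N)
        + real h * (1 - \<epsilon>) * \<phi> ^ (h - 1) * (1 - \<phi>) ^ (m + 1) * (real I / real N)
        + real (m + 1) * \<epsilon> * \<phi> ^ h * (1 - \<phi>) ^ m * (real I / real N)
        + \<phi> ^ h * (1 - \<phi>) ^ (m + 1)
            * ((real N - real J - real (m + h + 1) * real I) / real N)"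
    unfolding rc using Ns by (simp add: va_def vb_def vc_def ve_def field_simps)
  show ?thesis
    unfolding cond_prob_def num den Let_def \<phi>_def[symmetric] n2 d2 ..
qed

end
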